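(* Let $\mathbf{w} = (w_1, w_2, \ldots)$ be an arbitrary sequence of elements of $A^+$ (with $A=\{a,b\}$) such that $a \notin S_{\mathbf{w}}$ and $b \notin S_{\mathbf{w}}$. Then either $w_n \in aA^*b$ for all $n$ and $S_{\mathbf{w}} \subseteq aA^*b \cup \{\varepsilon\}$, or $w_n \in bA^*a$ for all $n$ and $S_{\mathbf{w}} \subseteq bA^*a \cup \{\varepsilon\}$.
   Context: $A = \{a,b\}$; $A^*$ is the free monoid on $A$ with empty word $\varepsilon$, and $A^+ = A^*\setminus\{\varepsilon\}$. For a sequence $\mathbf{w}=(w_1,w_2,\ldots)$ in $A^+$, $S_{\mathbf{w}}$ is the least submonoid $S$ of $A^*$ satisfying: (C1) if $w_n = s v u v s'$ for some $n$, with $s, s' \in S$ and $u, v \in A^*$, then $v \in S$; (C2) if $w_m = s v t$ and $w_n = t' v s'$ for some $m \neq n$, with $s, s' \in S$ and $t, t', v \in A^*$, then $v \in S$. (Intersections of such submonoids again satisfy (C1),(C2), and $A^*$ satisfies them, so the least one exists.) *)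

theory Defs
  imports Main
begin

datatype letter = La | Lb

type_synonym word = "letter list"

definition submonoid :: "word set \<Rightarrow> bool" where
  "submonoid S \<longleftrightarrow> [] \<in> S \<and> (\<forall>x\<in>S. \<forall>y\<in>S. x @ y \<in> S)"

definition C1 :: "(nat \<Rightarrow> word) \<Rightarrow> word set \<Rightarrow> bool" where
  "C1 w S \<longleftrightarrow> (\<forall>n s s' u v. s \<in> S \<longrightarrow> s' \<in> S \<longrightarrow>
       w n = s @ v @ u @ v @ s' \<longrightarrow> v \<in> S)"

definition C2 :: "(nat \<Rightarrow> word) \<Rightarrow> word set \<Rightarrow> bool" where
  "C2 w S \<longleftrightarrow> (\<forall>m n s s' t t' v. m \<noteq> n \<longrightarrow> s \<in> S \<longrightarrow> s' \<in> S \<longrightarrow>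
       w m = s @ v @ t \<longrightarrow> w n = t' @ v @ s' \<longrightarrow> v \<in> S)"

definition Sw :: "(nat \<Rightarrow> word) \<Rightarrow> word set" where
  "Sw w = \<Inter> {S. submonoid S \<and> C1 w S \<and> C2 w S}"

definition starts_ends :: "letter \<Rightarrow> letter \<Rightarrow> word set" where
  "starts_ends x y = {[x] @ u @ [y] | u. True}"

end

theory Submission
  imports Defs
begin

lemma Sw_least: "submonoid S \<Longrightarrow> C1 w S \<Longrightarrow> C2 w S \<Longrightarrow> Sw w \<subseteq> S"
  unfolding Sw_def by auto

lemma Sw_nil: "[] \<in> Sw w"
  unfolding Sw_def submonoid_def by auto

lemma Sw_app: "x \<in> Sw w \<Longrightarrow> y \<in> Sw w \<Longrightarrow> x @ y \<in> Sw w"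
  unfolding Sw_def submonoid_def by auto

lemma Sw_C1: "s \<in> Sw w \<Longrightarrow> s' \<in> Sw w \<Longrightarrow> w n = s @ v @ u @ v @ s' \<Longrightarrow> v \<in> Sw w"
  unfolding Sw_def C1_def by blast

lemma Sw_C2: "m \<noteq> n \<Longrightarrow> s \<in> Sw w \<Longrightarrow> s' \<in> Sw w \<Longrightarrow> w m = s @ v @ t \<Longrightarrow> w n = t' @ v @ s'
   \<Longrightarrow> v \<in> Sw w"
  unfolding Sw_def C2_def by blast

lemma two_letters: "(x::letter) \<noteq> z \<Longrightarrow> y \<noteq> z \<Longrightarrow> x = y"
  by (cases x; cases y; cases z) auto

lemma hd_last_ne:
  assumes ne: "\<forall>n. w n \<noteq> []" and mn: "m \<noteq> n" and c: "hd (w m) = last (w n)"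
  shows "[hd (w m)] \<in> Sw w"
proof -
  have 1: "w m = [] @ [hd (w m)] @ tl (w m)" using ne by simp
  have 2: "w n = butlast (w n) @ [hd (w m)] @ []" using ne c by simp
  show ?thesis using Sw_C2[OF mn Sw_nil Sw_nil 1 2] .
qed

lemma start_lemma:
  assumes wn: "w n \<in> starts_ends x y" and xy: "x \<noteq> y"
    and v: "v \<in> Sw w" and s: "s \<in> Sw w" and eq: "w n = s @ v @ t" and vne: "v \<noteq> []"
    and hy: "hd v = y"
  shows "[y] \<in> Sw w"
proof -
  obtain v' where vv: "v = y # v'" using vne hy by (cases v) auto
  obtain u where wu: "w n = [x] @ u @ [y]" using wn unfolding starts_ends_def by auto
  show ?thesis
  proof (cases "v' @ t = []")
    case True then show ?thesis using v vv by simp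
  next
    case False
    have "last (w n) = y" using wu by simp
    hence "last (v' @ t) = y" using eq vv False by (auto split: if_splits)
    then obtain r where r: "v' @ t = r @ [y]" using False
      by (metis append_butlast_last_id)
    have "w n = s @ [y] @ r @ [y] @ []" using eq vv r by simp
    then show ?thesis using Sw_C1[OF s Sw_nil] by blast
  qed
qed

lemma end_lemma:
  assumes wn: "w n \<in> starts_ends x y" and xy: "x \<noteq> y"
    and v: "v \<in> Sw w" and s: "s' \<in> Sw w" and eq: "w n = t @ v @ s'" and vne: "v \<noteq> []"
    and hy: "last v = x"
  shows "[x] \<in> Sw w"
proof -
  obtain v' where vv: "v = v' @ [x]" using vne hy by (metis append_butlast_last_id)
  obtain u where wu: "w n = [x] @ u @ [y]" using wn unfolding starts_ends_def by auto
  show ?thesis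
  proof (cases "t @ v' = []")
    case True then show ?thesis using v vv by simp
  next
    case False
    have "hd (w n) = x" using wu by simp
    hence "hd (t @ v') = x" using eq vv False by (cases t; cases v') auto
    then obtain r where r: "t @ v' = x # r" using False
      by (cases "t @ v'") auto
    have "w n = [] @ [x] @ r @ [x] @ s'" using eq vv r by simp
    then show ?thesis using Sw_C1[OF Sw_nil s] by blast
  qed
qed

lemma good_elem:
  assumes xy: "x \<noteq> y" and v: "v \<in> Sw w" and vne: "v \<noteq> []"
    and h1: "hd v \<noteq> y" and h2: "last v \<noteq> x"
  shows "v \<in> starts_ends x y"
proof -
  have hx: "hd v = x" using h1 xy two_letters by blast
  have ly: "last v = y" using h2 xy two_letters by metis
  have "v \<noteq> [hd v]" using hx ly xy by (metis last_ConsL)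
  then obtain r where "tl v = r @ [y]" using vne ly
    by (metis append_butlast_last_id last_tl list.collapse)
  hence "v = [x] @ r @ [y]" using hx vne by (metis append_Cons append_Nil list.collapse)
  thus ?thesis unfolding starts_ends_def by auto
qed

lemma generic:
  assumes all: "\<forall>n. w n \<in> starts_ends x y" and xy: "x \<noteq> y"
    and nx: "[x] \<notin> Sw w" and ny: "[y] \<notin> Sw w"
  shows "Sw w \<subseteq> starts_ends x y \<union> {[]}"
proof -
  define T where "T = {v \<in> Sw w. v = [] \<or> v \<in> starts_ends x y}"
  have key: "v \<in> T" if v: "v \<in> Sw w" and pre: "w n = s @ v @ t" "s \<in> Sw w"
      and post: "w m = t' @ v @ s'" "s' \<in> Sw w" for v s t n m t' s'
  proof (cases "v = []")
    case True then show ?thesis using v T_def by simp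
  next
    case False
    have "hd v \<noteq> y" using start_lemma[OF all[rule_format] xy v pre(2) pre(1) False] ny by blast
    moreover have "last v \<noteq> x" using end_lemma[OF all[rule_format] xy v post(2) post(1) False] nx by blast
    ultimately show ?thesis using good_elem[OF xy v False] v T_def by blast
  qed
  have sm: "submonoid T"
    unfolding submonoid_def T_def starts_ends_def
    using Sw_nil Sw_app by fastforce
  have c1: "C1 w T"
    unfolding C1_def
  proof (intro allI impI)
    fix n s s' u v assume a: "s \<in> T" "s' \<in> T" "w n = s @ v @ u @ v @ s'"
    have sS: "s \<in> Sw w" "s' \<in> Sw w" using a T_def by auto
    have vS: "v \<in> Sw w" using Sw_C1[OF sS a(3)] .
    show "v \<in> T" using key[OF vS _ sS(1) _ sS(2), of n "u @ v @ s'" n "s @ v @ u"] a(3) by simp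
  qed
  have c2: "C2 w T"
    unfolding C2_def
  proof (intro allI impI)
    fix m n s s' t t' v assume a: "m \<noteq> n" "s \<in> T" "s' \<in> T" "w m = s @ v @ t" "w n = t' @ v @ s'"
    have sS: "s \<in> Sw w" "s' \<in> Sw w" using a T_def by auto
    have vS: "v \<in> Sw w" using Sw_C2[OF a(1) sS a(4) a(5)] .
    show "v \<in> T" using key[OF vS a(4) sS(1) a(5) sS(2)] .
  qed
  have "Sw w \<subseteq> T" using Sw_least[OF sm c1 c2] .
  thus ?thesis unfolding T_def by auto
qed

theorem lemma3p4:
  fixes w :: "nat \<Rightarrow> word"
  assumes "\<forall>n. w n \<noteq> []"
    and "[La] \<notin> Sw w" and "[Lb] \<notin> Sw w"
  shows "((\<forall>n. w n \<in> starts_ends La Lb) \<and> Sw w \<subseteq> starts_ends La Lb \<union> {[]})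
       \<or> ((\<forall>n. w n \<in> starts_ends Lb La) \<and> Sw w \<subseteq> starts_ends Lb La \<union> {[]})"
proof -
  have notS: "[c] \<notin> Sw w" for c using assms(2,3) by (cases c) auto
  have ne: "m \<noteq> n \<Longrightarrow> hd (w m) \<noteq> last (w n)" for m n
    using hd_last_ne[OF assms(1)] notS by blast
  have lasteq: "last (w i) = last (w j)" for i j
  proof -
    have "i + j + 1 \<noteq> i" "i + j + 1 \<noteq> j" by auto
    thus ?thesis using ne two_letters by metis
  qed
  have hdeq: "hd (w i) = hd (w j)" for i j
  proof -
    have "i + j + 1 \<noteq> i" "i + j + 1 \<noteq> j" by auto
    thus ?thesis using ne two_letters by metis
  qed
  define F where "F = hd (w 0)"
  define L where "L = last (w 0)"
  have FL: "F \<noteq> L" using ne[of 0 1] hdeq[of 0 0] lasteq[of 1 0] unfolding F_def L_def by simp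
  have allw: "\<forall>n. w n \<in> starts_ends F L"
  proof
    fix n
    have h: "hd (w n) = F" "last (w n) = L" using hdeq lasteq F_def L_def by auto
    have wn: "w n \<noteq> []" using assms(1) by auto
    hence "w n \<noteq> [F]" using h FL by (metis last_ConsL list.sel(1))
    hence tne: "tl (w n) \<noteq> []" using h wn by (metis list.collapse)
    have "last (tl (w n)) = L" using h tne wn by (metis last_tl)
    hence "tl (w n) = butlast (tl (w n)) @ [L]" using tne by (metis append_butlast_last_id)
    hence "w n = [F] @ butlast (tl (w n)) @ [L]" using h wn by (metis append_Cons append_Nil list.collapse)
    thus "w n \<in> starts_ends F L" unfolding starts_ends_def by blast
  qed
  have sub: "Sw w \<subseteq> starts_ends F L \<union> {[]}" using generic[OF allw FL notS notS] .
  show ?thesis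
  proof (cases F)
    case La
    then have "L = Lb" using FL by (cases L) auto
    then show ?thesis using allw sub La by simp
  next
    case Lb
    then have "L = La" using FL by (cases L) auto
    then show ?thesis using allw sub Lb by simp
  qed
qed

end
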